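(* For every integer $n\geq 1$, the map $\Phi$ restricts to a bijection from $\mathcal{M}^\star_n$ onto $\mathcal{GD}^\star_n$, and to a bijection from $\mathcal{M}^{s,\star}_n$ onto $\mathcal{D}^\star_n$.
   Context: For $n\geq 1$, $\mathcal{M}_n$ is the set of $n$-multisets of $[n]=\{1,\dots,n\}$, each identified with the non-decreasing sequence $\pi=\pi_1\cdots\pi_n$ of its elements. $\pi$ is superdiagonal if $i\leq\pi_i$ for all $i$. $\mathcal{M}^\star_n$ is the set of $\pi\in\mathcal{M}_n$ with no consecutive integers, i.e. $\pi_{i+1}\neq\pi_i+1$ for all $i\in[n-1]$, and $\mathcal{M}^{s,\star}_n$ is the set of superdiagonal elements of $\mathcal{M}^\star_n$. Paths are words in $U$ (up step) and $D$ (down step); $\mathcal{GD}_n$ is the set of words with $n$ letters $U$ and $n$ letters $D$ starting with $U$, and $\mathcal{D}_n\subseteq\mathcal{GD}_n$ those in which every prefix has at least as many $U$'s as $D$'s (Dyck paths). For a set $\mathcal{P}$ of paths, $\mathcal{P}^\star$ is the subset of paths not containing $DUD$ as a factor (three consecutive letters). The map $\Phi:\mathcal{M}_n\to\mathcal{GD}_n$ is $\Phi(\pi)=U^{\pi_1}DU^{\pi_2-\pi_1}D\cdots U^{\pi_n-\pi_{n-1}}DU^{n-\pi_n}$. *)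

theory Defs
  imports Main
begin

text \<open>An n-multiset of [n] is identified with its non-decreasing sequence of elements,
  represented as a list of length n with entries in {1..n}.\<close>

definition Mset :: "nat \<Rightarrow> nat list set" where
  "Mset n = {pi. length pi = n \<and> sorted pi \<and> (\<forall>x\<in>set pi. 1 \<le> x \<and> x \<le> n)}"

definition superdiagonal :: "nat list \<Rightarrow> bool" where
  "superdiagonal pi \<longleftrightarrow> (\<forall>i<length pi. i + 1 \<le> pi ! i)"

definition no_consec :: "nat list \<Rightarrow> bool" where
  "no_consec pi \<longleftrightarrow> (\<forall>i. i + 1 < length pi \<longrightarrow> pi ! (i + 1) \<noteq> pi ! i + 1)"

definition Mset_star :: "nat \<Rightarrow> nat list set" where
  "Mset_star n = {pi \<in> Mset n. no_consec pi}"

definition Mset_s_star :: "nat \<Rightarrow> nat list set" where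
  "Mset_s_star n = {pi \<in> Mset_star n. superdiagonal pi}"

datatype step = U | D

definition GD :: "nat \<Rightarrow> step list set" where
  "GD n = {w. count_list w U = n \<and> count_list w D = n \<and> w \<noteq> [] \<and> hd w = U}"

definition Dyck :: "nat \<Rightarrow> step list set" where
  "Dyck n = {w \<in> GD n. \<forall>k \<le> length w.
      count_list (take k w) D \<le> count_list (take k w) U}"

definition no_DUD :: "step list \<Rightarrow> bool" where
  "no_DUD w \<longleftrightarrow> (\<nexists>xs ys. w = xs @ [D, U, D] @ ys)"

definition GD_star :: "nat \<Rightarrow> step list set" where
  "GD_star n = {w \<in> GD n. no_DUD w}"

definition Dyck_star :: "nat \<Rightarrow> step list set" where
  "Dyck_star n = {w \<in> Dyck n. no_DUD w}"

fun phi_aux :: "nat \<Rightarrow> nat \<Rightarrow> nat list \<Rightarrow> step list" where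
  "phi_aux n prev [] = replicate (n - prev) U"
| "phi_aux n prev (x # xs) = replicate (x - prev) U @ [D] @ phi_aux n x xs"

definition Phi :: "nat \<Rightarrow> nat list \<Rightarrow> step list" where
  "Phi n pi = phi_aux n 0 pi"

end

theory Submission
  imports Defs
begin

fun decode :: "nat \<Rightarrow> step list \<Rightarrow> nat list" where
  "decode c [] = []"
| "decode c (U # w) = decode (Suc c) w"
| "decode c (D # w) = c # decode c w"

lemma decode_rep: "decode c (replicate k U @ w) = decode (c + k) w"
  by (induction k arbitrary: c) auto

lemma decode_phi:
  "sorted xs \<Longrightarrow> (\<forall>y\<in>set xs. prev \<le> y) \<Longrightarrow> decode prev (phi_aux n prev xs) = xs"
proof (induction xs arbitrary: prev)
  case Nil
  then show ?case using decode_rep[of prev "n - prev" "[]"] by simp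
next
  case (Cons x xs)
  then show ?case by (simp add: decode_rep)
qed

lemma decode_props:
  "length (decode c w) = count_list w D \<and> sorted (decode c w) \<and>
   (\<forall>y\<in>set (decode c w). c \<le> y \<and> y \<le> c + count_list w U)"
proof (induction c w rule: decode.induct)
  case (1 c) then show ?case by simp
next
  case (2 c w) then show ?case by force
next
  case (3 c w) then show ?case by auto
qed

lemma phi_U:
  assumes "c < n" "\<forall>y\<in>set ys. c < y"
  shows "phi_aux n c ys = U # phi_aux n (Suc c) ys"
proof (cases ys)
  case Nil
  have "n - c = Suc (n - Suc c)" using assms(1) by (rule Suc_diff_Suc[symmetric])
  then show ?thesis using Nil by simp
next
  case (Cons y ys')
  then have "c < y" using assms by simp
  then have "y - c = Suc (y - Suc c)" by (rule Suc_diff_Suc[symmetric])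
  then show ?thesis using Cons by simp
qed

lemma phi_decode: "phi_aux (c + count_list w U) c (decode c w) = w"
proof (induction c w rule: decode.induct)
  case (1 c) then show ?case by simp
next
  case (2 c w)
  have "\<forall>y\<in>set (decode (Suc c) w). c < y" using decode_props[of "Suc c" w] by auto
  then have "phi_aux (c + count_list (U # w) U) c (decode c (U # w))
     = U # phi_aux (Suc c + count_list w U) (Suc c) (decode (Suc c) w)"
    using phi_U[of c "c + count_list (U # w) U" "decode (Suc c) w"] by simp
  then show ?case using 2 by simp
next
  case (3 c w) then show ?case by simp
qed

lemma count_rep[simp]: "count_list (replicate k a) b = (if a = b then k else 0)"
  by (induction k) auto

lemma count_phi:
  "sorted xs \<Longrightarrow> prev \<le> n \<Longrightarrow> (\<forall>y\<in>set xs. prev \<le> y \<and> y \<le> n) \<Longrightarrow>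
   count_list (phi_aux n prev xs) U = n - prev \<and> count_list (phi_aux n prev xs) D = length xs"
proof (induction xs arbitrary: prev)
  case Nil then show ?case by simp
next
  case (Cons x xs)
  then show ?case by auto
qed

fun nd :: "step list \<Rightarrow> bool" where
  "nd [] = True"
| "nd (x # w) = (nd w \<and> \<not> (x = D \<and> take 2 w = [U, D]))"

lemma no_DUD_Cons:
  "no_DUD (a # w) = (no_DUD w \<and> \<not> (a = D \<and> take 2 w = [U, D]))"
proof -
  have "(\<exists>xs ys. a # w = xs @ [D, U, D] @ ys) \<longleftrightarrow>
        (a = D \<and> take 2 w = [U, D]) \<or> (\<exists>xs ys. w = xs @ [D, U, D] @ ys)"
  proof
    assume "\<exists>xs ys. a # w = xs @ [D, U, D] @ ys"
    then obtain xs ys where h: "a # w = xs @ [D, U, D] @ ys" by blast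
    show "(a = D \<and> take 2 w = [U, D]) \<or> (\<exists>xs ys. w = xs @ [D, U, D] @ ys)"
    proof (cases xs)
      case Nil then show ?thesis using h by auto
    next
      case (Cons b xs') then show ?thesis using h by auto
    qed
  next
    assume "(a = D \<and> take 2 w = [U, D]) \<or> (\<exists>xs ys. w = xs @ [D, U, D] @ ys)"
    then show "\<exists>xs ys. a # w = xs @ [D, U, D] @ ys"
    proof
      assume h: "a = D \<and> take 2 w = [U, D]"
      then have "w = [U, D] @ drop 2 w" by (metis append_take_drop_id)
      then have "a # w = [] @ [D, U, D] @ drop 2 w" using h by simp
      then show ?thesis by blast
    next
      assume "\<exists>xs ys. w = xs @ [D, U, D] @ ys"
      then obtain xs ys where "w = xs @ [D, U, D] @ ys" by blast
      then have "a # w = (a # xs) @ [D, U, D] @ ys" by simp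
      then show ?thesis by blast
    qed
  qed
  then show ?thesis unfolding no_DUD_def by blast
qed

lemma no_DUD_nd: "no_DUD w = nd w"
proof (induction w)
  case Nil then show ?case by (simp add: no_DUD_def)
next
  case (Cons a w) then show ?case by (simp add: no_DUD_Cons)
qed

lemma nd_rep: "nd (replicate k U @ w) = nd w"
  by (induction k) auto

fun nc :: "nat list \<Rightarrow> bool" where
  "nc [] = True"
| "nc (x # xs) = (nc xs \<and> (xs \<noteq> [] \<longrightarrow> hd xs \<noteq> x + 1))"

lemma no_consec_Cons: "no_consec (x # xs) = (no_consec xs \<and> (xs \<noteq> [] \<longrightarrow> hd xs \<noteq> x + 1))"
proof -
  have "no_consec (x # xs) = (\<forall>i<length xs. xs ! i \<noteq> (x # xs) ! i + 1)"
    by (simp add: no_consec_def)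
  also have "\<dots> = ((xs \<noteq> [] \<longrightarrow> xs ! 0 \<noteq> x + 1) \<and>
      (\<forall>j. j + 1 < length xs \<longrightarrow> xs ! (j + 1) \<noteq> xs ! j + 1))"
    apply (rule iffI)
     apply auto[1]
    apply clarify
    subgoal for i by (cases i) auto
    done
  also have "\<dots> = (no_consec xs \<and> (xs \<noteq> [] \<longrightarrow> hd xs \<noteq> x + 1))"
    by (auto simp: no_consec_def hd_conv_nth)
  finally show ?thesis .
qed

lemma no_consec_nc: "no_consec xs = nc xs"
proof (induction xs)
  case Nil then show ?case by (simp add: no_consec_def)
next
  case (Cons a xs) then show ?case by (simp add: no_consec_Cons)
qed

lemma take2_rep: "(take 2 (replicate k U @ w) = [U, D]) = (k = 0 \<and> take 2 w = [U, D] \<or> k = 1 \<and> w \<noteq> [] \<and> hd w = D)"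
proof (cases k)
  case 0 then show ?thesis by simp
next
  case (Suc m)
  then show ?thesis
  proof (cases m)
    case 0 then show ?thesis using Suc by (cases w) auto
  next
    case (Suc m') then show ?thesis using \<open>k = Suc m\<close> by simp
  qed
qed

lemma take2_phi: "(take 2 (phi_aux n x xs) = [U, D]) = (xs \<noteq> [] \<and> hd xs = x + 1)"
proof (cases xs)
  case Nil
  then show ?thesis using take2_rep[of "n - x" "[]"] by simp
next
  case (Cons y ys)
  then show ?thesis using take2_rep[of "y - x" "D # phi_aux n y ys"] by auto
qed

lemma nd_phi: "nd (phi_aux n prev xs) = nc xs"
proof (induction xs arbitrary: prev)
  case Nil then show ?case using nd_rep[of _ "[]"] by simp
next
  case (Cons x xs)
  then show ?case by (auto simp: nd_rep take2_phi)
qed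

definition P :: "nat \<Rightarrow> step list \<Rightarrow> bool" where
  "P h w \<longleftrightarrow> (\<forall>k \<le> length w. count_list (take k w) D \<le> count_list (take k w) U + h)"

lemma all_le_Suc: "(\<forall>k \<le> Suc m. Q k) = (Q 0 \<and> (\<forall>j\<le>m. Q (Suc j)))"
  apply (rule iffI)
   apply simp
  apply clarify
  subgoal for k by (cases k) auto
  done

lemma P_Nil: "P h []" by (simp add: P_def)

lemma P_U: "P h (U # w) = P (Suc h) w"
  unfolding P_def by (simp only: length_Cons all_le_Suc) simp

lemma P_D: "P h (D # w) = (1 \<le> h \<and> P (h - 1) w)"
proof -
  have "P h (D # w) = (\<forall>j\<le>length w. Suc (count_list (take j w) D) \<le> count_list (take j w) U + h)"
    unfolding P_def by (simp only: length_Cons all_le_Suc) simp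
  also have "\<dots> = (1 \<le> h \<and> P (h - 1) w)"
    unfolding P_def
    apply (rule iffI)
     apply (rule conjI)
      apply (drule spec[of _ 0]) apply simp
     apply (intro allI impI) subgoal for k apply (drule spec[of _ k]) by simp
    apply (intro allI impI) subgoal for k by auto
    done
  finally show ?thesis .
qed

lemma P_rep: "P h (replicate k U @ w) = P (h + k) w"
  by (induction k arbitrary: h) (auto simp: P_U)

fun sp :: "nat \<Rightarrow> nat list \<Rightarrow> bool" where
  "sp i [] = True"
| "sp i (x # xs) = (i + 1 \<le> x \<and> sp (i + 1) xs)"

lemma sp_iff: "sp i xs = (\<forall>j<length xs. i + j + 1 \<le> xs ! j)"
proof (induction xs arbitrary: i)
  case Nil then show ?case by simp
next
  case (Cons x xs)
  show ?case
    apply (simp add: Cons)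
    apply (rule iffI)
     apply clarify
    subgoal for j by (cases j) auto
    apply (rule conjI)
     apply (drule spec[of _ 0]) apply simp
    apply clarify
    subgoal for j by (drule spec[of _ "Suc j"]) simp
    done
qed

lemma P_phi:
  "sorted xs \<Longrightarrow> (\<forall>y\<in>set xs. prev \<le> y) \<Longrightarrow> i \<le> prev \<Longrightarrow>
   P (prev - i) (phi_aux n prev xs) = sp i xs"
proof (induction xs arbitrary: prev i)
  case Nil then show ?case using P_rep[of _ _ "[]"] by (simp add: P_Nil)
next
  case (Cons x xs)
  have e: "P (prev - i) (phi_aux n prev (x # xs)) = (1 \<le> x - i \<and> P (x - i - 1) (phi_aux n x xs))"
    using Cons.prems by (simp add: P_rep P_D)
  show ?case
  proof (cases "i + 1 \<le> x")
    case True
    then have "P (x - (i+1)) (phi_aux n x xs) = sp (i+1) xs"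
      using Cons by (intro Cons.IH) auto
    moreover have "1 \<le> x - i" using True by linarith
    ultimately show ?thesis using e True by simp
  next
    case False then show ?thesis using e by simp
  qed
qed

lemma Phi_props:
  assumes "pi \<in> Mset n" "n \<ge> 1"
  shows "Phi n pi \<in> GD n" "no_DUD (Phi n pi) = no_consec pi"
    "(Phi n pi \<in> Dyck n) = superdiagonal pi"
proof -
  have s: "sorted pi" "length pi = n" "\<forall>y\<in>set pi. 1 \<le> y \<and> y \<le> n" using assms by (auto simp: Mset_def)
  have c: "count_list (Phi n pi) U = n" "count_list (Phi n pi) D = n"
    using count_phi[of pi 0 n] s by (auto simp: Phi_def)
  obtain x xs where pi: "pi = x # xs" using s assms by (cases pi) auto
  have "x \<ge> 1" using s pi by auto
  then have h: "Phi n pi \<noteq> [] \<and> hd (Phi n pi) = U" using pi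
    by (cases x) (auto simp: Phi_def)
  show g: "Phi n pi \<in> GD n" using c h by (simp add: GD_def)
  show "no_DUD (Phi n pi) = no_consec pi"
    by (simp add: no_DUD_nd no_consec_nc Phi_def nd_phi)
  have "P 0 (Phi n pi) = sp 0 pi" using P_phi[of pi 0 0 n] s by (simp add: Phi_def)
  then show "(Phi n pi \<in> Dyck n) = superdiagonal pi"
    using g by (simp add: Dyck_def P_def sp_iff superdiagonal_def)
qed

lemma decode_GD:
  assumes "w \<in> GD n"
  shows "decode 0 w \<in> Mset n" "Phi n (decode 0 w) = w"
proof -
  have c: "count_list w U = n" "count_list w D = n" "w \<noteq> []" "hd w = U" using assms by (auto simp: GD_def)
  then obtain w' where w: "w = U # w'" by (cases w) auto
  show "Phi n (decode 0 w) = w" using phi_decode[of 0 w] c by (simp add: Phi_def)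
  show "decode 0 w \<in> Mset n" using decode_props[of 1 w'] c w by (auto simp: Mset_def)
qed

theorem theorem2:
  fixes n :: nat
  assumes "n \<ge> 1"
  shows "bij_betw (Phi n) (Mset_star n) (GD_star n) \<and>
         bij_betw (Phi n) (Mset_s_star n) (Dyck_star n)"
proof
  have inv: "decode 0 (Phi n a) = a" if "a \<in> Mset n" for a
    using that unfolding Mset_def Phi_def by (intro decode_phi) auto
  show "bij_betw (Phi n) (Mset_star n) (GD_star n)"
  proof (rule bij_betw_byWitness[where f'="decode 0"])
    show "\<forall>a\<in>Mset_star n. decode 0 (Phi n a) = a"
      using inv unfolding Mset_star_def by blast
    show "\<forall>a\<in>GD_star n. Phi n (decode 0 a) = a"
      using decode_GD(2) unfolding GD_star_def by blast
    show "Phi n ` Mset_star n \<subseteq> GD_star n"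
    proof
      fix w assume "w \<in> Phi n ` Mset_star n"
      then obtain p where p: "p \<in> Mset n" "no_consec p" "w = Phi n p" unfolding Mset_star_def by blast
      show "w \<in> GD_star n" unfolding GD_star_def
        using Phi_props(1,2)[OF p(1) assms] p by blast
    qed
    show "decode 0 ` GD_star n \<subseteq> Mset_star n"
    proof
      fix p assume "p \<in> decode 0 ` GD_star n"
      then obtain w where w: "w \<in> GD n" "no_DUD w" "p = decode 0 w" unfolding GD_star_def by blast
      then have "p \<in> Mset n" "Phi n p = w" using decode_GD by blast+
      then show "p \<in> Mset_star n" using Phi_props(2)[of p n] assms w unfolding Mset_star_def by blast
    qed
  qed
next
  have inv: "decode 0 (Phi n a) = a" if "a \<in> Mset n" for a
    using that unfolding Mset_def Phi_def by (intro decode_phi) auto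
  show "bij_betw (Phi n) (Mset_s_star n) (Dyck_star n)"
  proof (rule bij_betw_byWitness[where f'="decode 0"])
    show "\<forall>a\<in>Mset_s_star n. decode 0 (Phi n a) = a"
      using inv unfolding Mset_s_star_def Mset_star_def by blast
    show "\<forall>a\<in>Dyck_star n. Phi n (decode 0 a) = a"
      using decode_GD(2) unfolding Dyck_star_def Dyck_def by blast
    show "Phi n ` Mset_s_star n \<subseteq> Dyck_star n"
    proof
      fix w assume "w \<in> Phi n ` Mset_s_star n"
      then obtain p where p: "p \<in> Mset n" "no_consec p" "superdiagonal p" "w = Phi n p"
        unfolding Mset_s_star_def Mset_star_def by blast
      show "w \<in> Dyck_star n" unfolding Dyck_star_def
        using Phi_props(2,3)[OF p(1) assms] p by blast
    qed
    show "decode 0 ` Dyck_star n \<subseteq> Mset_s_star n"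
    proof
      fix p assume "p \<in> decode 0 ` Dyck_star n"
      then obtain w where w: "w \<in> Dyck n" "no_DUD w" "p = decode 0 w" unfolding Dyck_star_def by blast
      then have "w \<in> GD n" unfolding Dyck_def by blast
      then have "p \<in> Mset n" "Phi n p = w" using decode_GD w by blast+
      then show "p \<in> Mset_s_star n" using Phi_props(2,3)[of p n] assms w
        unfolding Mset_s_star_def Mset_star_def by blast
    qed
  qed
qed

end
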